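(* Let $s$ be even, $n\ge1$, let $A_1,\ldots,A_{s/2}\in\mathbb{R}^{n\times n}$ be symmetric matrices, let $h>0$, and let $U:\mathbb{R}^n\to\mathbb{R}$ be a potential. For $T>0$ let $\mathbb{T}$ be either the circle $\mathbb{R}/T\mathbb{Z}$ or the real line $\mathbb{R}$. For $y$ defined on $\mathbb{T}$ consider \[S_\Delta(y)=\int_{\mathbb{T}}L_\Delta\big(y(t),y(t+h),\ldots,y(t+\tfrac{s}{2}h)\big)\,\mathrm{d}t,\] \[L_\Delta\big(y(t),\ldots,y(t+\tfrac s2 h)\big)=\frac{1}{2h^2}\sum_{j=1}^{s/2}\langle A_j(y(t+jh)-y(t)),\,y(t+jh)-y(t)\rangle+U(y(t)).\] Then the variational principle $\delta S_\Delta=0$ (stationarity with respect to all variations $\delta y\in C^\infty_c(\mathbb{T},\mathbb{R}^n)$) implies the functional equation \[\sum_{j=1}^{s/2}A_j\big(y(t-jh)-2y(t)+y(t+jh)\big)=h^2\nabla U(y(t))\] on $\mathbb{T}$. Moreover, if $\mathbb{T}=[a,b]$ is an interval, then $\delta S_\Delta=0$ (with respect to variations $\delta y\in C^\infty_c([a+\frac s2 h,b-\frac s2 h],\mathbb{R}^n)$) implies this functional equation on the interval $[a+\frac s2 h,\,b-\frac s2 h]$. Here it is assumed that the function space for $y$ and the potential $U$ are such that $U\circ y$ and $\nabla U\circ y$ are square integrable.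
   Context: The variational derivative is $\delta S_\Delta(y)=\lim_{\epsilon\to0}\frac1\epsilon\big(S_\Delta(y+\epsilon\,\delta y)-S_\Delta(y)\big)$. *)

theory Defs
  imports "HOL-Analysis.Analysis"
begin

definition smooth_fun :: "(real \<Rightarrow> 'a::real_normed_vector) \<Rightarrow> bool" where
  "smooth_fun f \<longleftrightarrow>
     (\<exists>D. D 0 = f \<and> (\<forall>k t. (D k has_vector_derivative D (Suc k) t) (at t)))"

definition LDelta ::
  "nat \<Rightarrow> (nat \<Rightarrow> real^'n^'n) \<Rightarrow> real \<Rightarrow> (real^'n \<Rightarrow> real) \<Rightarrow> (real \<Rightarrow> real^'n) \<Rightarrow> real \<Rightarrow> real"
  where
  "LDelta s A h U y t =
     1 / (2 * h^2) * (\<Sum>j = 1..s div 2.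
        (A j *v (y (t + real j * h) - y t)) \<bullet> (y (t + real j * h) - y t))
     + U (y t)"

text \<open>Action on the circle R/TZ (y T-periodic): integral over one period.\<close>
definition S_circle ::
  "nat \<Rightarrow> (nat \<Rightarrow> real^'n^'n) \<Rightarrow> real \<Rightarrow> (real^'n \<Rightarrow> real) \<Rightarrow> real \<Rightarrow> (real \<Rightarrow> real^'n) \<Rightarrow> real"
  where "S_circle s A h U T y = integral {0..T} (LDelta s A h U y)"

text \<open>On the real line S_Delta(y) itself may diverge; the difference
  S_Delta(y + e dy) - S_Delta(y) is understood as the integral of the difference
  of the Lagrangians (which is compactly supported for compactly supported dy).\<close>
definition S_line_diff ::
  "nat \<Rightarrow> (nat \<Rightarrow> real^'n^'n) \<Rightarrow> real \<Rightarrow> (real^'n \<Rightarrow> real) \<Rightarrow> (real \<Rightarrow> real^'n) \<Rightarrow> (real \<Rightarrow> real^'n) \<Rightarrow> real"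
  where "S_line_diff s A h U y z = integral UNIV (\<lambda>t. LDelta s A h U z t - LDelta s A h U y t)"

text \<open>Action on an interval [a,b]: L_Delta at t needs y on [t, t + (s/2) h],
  so t ranges over [a, b - (s/2) h].\<close>
definition S_interval ::
  "nat \<Rightarrow> (nat \<Rightarrow> real^'n^'n) \<Rightarrow> real \<Rightarrow> (real^'n \<Rightarrow> real) \<Rightarrow> real \<Rightarrow> real \<Rightarrow> (real \<Rightarrow> real^'n) \<Rightarrow> real"
  where "S_interval s A h U a b y = integral {a..b - real (s div 2) * h} (LDelta s A h U y)"

end

theory Submission
  imports Defs
begin

definition flat :: "nat \<Rightarrow> real \<Rightarrow> real" where
  "flat m x = (if x > 0 then exp (- 1 / x) / x ^ m else 0)"

lemma flat_nonneg: "flat m x \<ge> 0"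
  by (simp add: flat_def)

lemma flat_pos: "x > 0 \<Longrightarrow> flat m x > 0"
  by (simp add: flat_def)

lemma flat_zero: "x \<le> 0 \<Longrightarrow> flat m x = 0"
  by (simp add: flat_def)

lemma flat_right0: "(flat m \<longlongrightarrow> 0) (at_right 0)"
proof -
  have "((\<lambda>u. u ^ m / exp u) \<longlongrightarrow> (0::real)) at_top"
    by (rule tendsto_power_div_exp_0)
  moreover have "eventually (\<lambda>u. u ^ m / exp u = flat m (inverse u)) at_top"
    using eventually_gt_at_top[of 0]
    by eventually_elim (simp add: flat_def exp_minus field_simps)
  ultimately have "((\<lambda>u. flat m (inverse u)) \<longlongrightarrow> 0) at_top"
    using tendsto_cong by fastforce
  then show ?thesis
    by (simp add: filterlim_at_right_to_top)
qed

lemma flat_deriv: "(flat m has_real_derivative (flat (m+2) x - real m * flat (m+1) x)) (at x)"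
proof (cases "x > 0")
  case True
  have d: "((\<lambda>x. exp (- 1 / x) / x ^ m) has_real_derivative (flat (m+2) x - real m * flat (m+1) x)) (at x)"
    using True
    apply (auto intro!: derivative_eq_intros simp: flat_def)
    apply (simp add: field_simps power2_eq_square)
    by (cases m) auto
  show ?thesis
  proof (rule has_field_derivative_transform_within_open[OF d, of "{0<..}"])
    show "x \<in> {0<..}" using True by simp
  qed (auto simp: flat_def)
next
  case False
  show ?thesis
  proof (cases "x < 0")
    case True
    have d: "((\<lambda>x. 0) has_real_derivative 0) (at x)" by simp
    have "(flat m has_real_derivative 0) (at x)"
      by (rule has_field_derivative_transform_within_open[OF d, of "{..<0}"])
         (use True in \<open>auto simp: flat_def\<close>)
    then show ?thesis using True by (simp add: flat_def)
  next
    case False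
    with \<open>\<not> x > 0\<close> have x: "x = 0" by simp
    have "((\<lambda>y. (flat m y - flat m 0) / (y - 0)) \<longlongrightarrow> 0) (at 0)"
    proof (rule filterlim_split_at_real)
      show "((\<lambda>y. (flat m y - flat m 0) / (y - 0)) \<longlongrightarrow> 0) (at_left 0)"
        by (rule tendsto_eventually) (auto simp: eventually_at_left_field flat_def intro!: exI[of _ "-1"])
      have "eventually (\<lambda>y. flat (m+1) y = (flat m y - flat m 0) / (y - 0)) (at_right 0)"
        by (auto simp: eventually_at_right_field flat_def intro!: exI[of _ 1])
      then show "((\<lambda>y. (flat m y - flat m 0) / (y - 0)) \<longlongrightarrow> 0) (at_right 0)"
        using flat_right0[of "m+1"] tendsto_cong by fastforce
    qed
    then show ?thesis using x by (simp add: has_field_derivative_iff flat_def)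
  qed
qed

inductive_set falg :: "(real \<Rightarrow> real) set \<Rightarrow> (real \<Rightarrow> real) set" for Gs where
  gen: "g \<in> Gs \<Longrightarrow> g \<in> falg Gs"
| const: "(\<lambda>_. c) \<in> falg Gs"
| add: "f \<in> falg Gs \<Longrightarrow> g \<in> falg Gs \<Longrightarrow> (\<lambda>x. f x + g x) \<in> falg Gs"
| mult: "f \<in> falg Gs \<Longrightarrow> g \<in> falg Gs \<Longrightarrow> (\<lambda>x. f x * g x) \<in> falg Gs"

lemma falg_mono: "f \<in> falg Gs \<Longrightarrow> Gs \<subseteq> Hs \<Longrightarrow> f \<in> falg Hs"
  by (induction rule: falg.induct) (auto intro: falg.intros)

lemma falg_deriv:
  assumes H: "\<forall>g\<in>Gs. \<exists>g'\<in>falg Gs. \<forall>x. (g has_real_derivative g' x) (at x)"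
  shows "f \<in> falg Gs \<Longrightarrow> \<exists>f'\<in>falg Gs. \<forall>x. (f has_real_derivative f' x) (at x)"
proof (induction rule: falg.induct)
  case (gen g) then show ?case using H by blast
next
  case (const c) then show ?case by (intro bexI[of _ "\<lambda>_. 0"]) (auto intro: falg.intros)
next
  case (add f g)
  then obtain f' g' where "f' \<in> falg Gs" "g' \<in> falg Gs" "\<forall>x. (f has_real_derivative f' x) (at x)"
    "\<forall>x. (g has_real_derivative g' x) (at x)" by blast
  then show ?case
    by (intro bexI[of _ "\<lambda>x. f' x + g' x"]) (auto intro: falg.intros derivative_intros)
next
  case (mult f g)
  then obtain f' g' where "f' \<in> falg Gs" "g' \<in> falg Gs" "\<forall>x. (f has_real_derivative f' x) (at x)"
    "\<forall>x. (g has_real_derivative g' x) (at x)" by blast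
  then show ?case
  proof (intro bexI[of _ "\<lambda>x. f' x * g x + g' x * f x"] allI)
    show "(\<lambda>x. f' x * g x + g' x * f x) \<in> falg Gs"
      using falg.add[OF falg.mult[OF \<open>f' \<in> falg Gs\<close> mult.hyps(2)] falg.mult[OF \<open>g' \<in> falg Gs\<close> mult.hyps(1)]] .
    fix x show "((\<lambda>x. f x * g x) has_real_derivative f' x * g x + g' x * f x) (at x)"
      using DERIV_mult[OF spec[OF \<open>\<forall>x. (f has_real_derivative f' x) (at x)\<close>, of x] spec[OF \<open>\<forall>x. (g has_real_derivative g' x) (at x)\<close>, of x]] by simp
  qed
qed

lemma falg_smooth:
  assumes H: "\<forall>g\<in>Gs. \<exists>g'\<in>falg Gs. \<forall>x. (g has_real_derivative g' x) (at x)"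
    and f: "f \<in> falg Gs"
  shows "smooth_fun f"
proof -
  define nx where "nx = (\<lambda>f::real\<Rightarrow>real. SOME f'. f' \<in> falg Gs \<and> (\<forall>x. (f has_real_derivative f' x) (at x)))"
  have nx: "nx g \<in> falg Gs \<and> (\<forall>x. (g has_real_derivative nx g x) (at x))" if "g \<in> falg Gs" for g
  proof -
    from falg_deriv[OF H that] have "\<exists>f'. f' \<in> falg Gs \<and> (\<forall>x. (g has_real_derivative f' x) (at x))" by blast
    then show ?thesis unfolding nx_def by (rule someI_ex)
  qed
  define D where "D k = (nx ^^ k) f" for k
  have Din: "D k \<in> falg Gs" for k
    by (induction k) (auto simp: D_def f nx)
  have "(D k has_vector_derivative D (Suc k) t) (at t)" for k t
    using nx[OF Din[of k]] by (simp add: D_def has_real_derivative_iff_has_vector_derivative)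
  moreover have "D 0 = f" by (simp add: D_def)
  ultimately show ?thesis unfolding smooth_fun_def by blast
qed

lemma smooth_scaleR:
  assumes "smooth_fun (f :: real \<Rightarrow> real)"
  shows "smooth_fun (\<lambda>t. f t *\<^sub>R v)"
proof -
  from assms obtain D where D: "D 0 = f" "\<And>k t. (D k has_vector_derivative D (Suc k) t) (at t)"
    unfolding smooth_fun_def by blast
  have "((\<lambda>t. D k t *\<^sub>R v) has_vector_derivative D (Suc k) t *\<^sub>R v) (at t)" for k t
    using has_vector_derivative_scaleR[OF D(2)[of k t, unfolded has_real_derivative_iff_has_vector_derivative[symmetric]], of "\<lambda>_. v" 0]
    by simp
  then show ?thesis unfolding smooth_fun_def
    by (intro exI[of _ "\<lambda>k t. D k t *\<^sub>R v"]) (simp add: D(1))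
qed

lemma smooth_continuous:
  assumes "smooth_fun f" shows "continuous_on UNIV f"
proof -
  from assms obtain D where D: "D 0 = f" "\<And>k t. (D k has_vector_derivative D (Suc k) t) (at t)"
    unfolding smooth_fun_def by blast
  show ?thesis
    using D by (metis continuous_at_imp_continuous_on has_vector_derivative_continuous)
qed

lemma comp_smooth:
  assumes q: "\<And>x. (q has_real_derivative q' x) (at x)"
    and q': "q' \<in> falg H"
    and H: "\<forall>g\<in>H. \<exists>g'\<in>falg H. \<forall>x. (g has_real_derivative g' x) (at x)"
  shows "smooth_fun (\<lambda>x. flat 0 (q x))"
proof -
  define Gs where "Gs = H \<union> range (\<lambda>m x. flat m (q x))"
  have sub: "falg H \<subseteq> falg Gs" using falg_mono[of _ H Gs] by (auto simp: Gs_def)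
  have fm: "(\<lambda>x. flat m (q x)) \<in> falg Gs" for m
    by (rule falg.gen) (auto simp: Gs_def)
  have "\<forall>g\<in>Gs. \<exists>g'\<in>falg Gs. \<forall>x. (g has_real_derivative g' x) (at x)"
  proof
    fix g assume "g \<in> Gs"
    then consider "g \<in> H" | m where "g = (\<lambda>x. flat m (q x))" by (auto simp: Gs_def)
    then show "\<exists>g'\<in>falg Gs. \<forall>x. (g has_real_derivative g' x) (at x)"
    proof cases
      case 1 then show ?thesis using H sub by blast
    next
      case 2
      have "(\<lambda>x. (flat (m+2) (q x) + (- real m) * flat (m+1) (q x)) * q' x) \<in> falg Gs"
        by (intro falg.mult falg.add fm falg.const) (use q' sub in auto)
      moreover have "((\<lambda>x. flat m (q x)) has_real_derivative (flat (m+2) (q x) + (- real m) * flat (m+1) (q x)) * q' x) (at x)" for x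
        using DERIV_chain2[OF flat_deriv q] by simp
      ultimately show ?thesis unfolding 2
        by (intro bexI[of _ "\<lambda>x. (flat (m+2) (q x) + (- real m) * flat (m+1) (q x)) * q' x"]) auto
    qed
  qed
  then show ?thesis using falg_smooth fm[of 0] by blast
qed

definition lbump :: "real \<Rightarrow> real \<Rightarrow> real \<Rightarrow> real" where
  "lbump c d t = flat 0 ((t - c) * (d - t))"

lemma lbump_smooth: "smooth_fun (lbump c d)"
proof -
  have id: "(\<lambda>x. x) \<in> falg {\<lambda>x. x}" by (rule falg.gen) simp
  have "smooth_fun (\<lambda>t. flat 0 ((t - c) * (d - t)))"
  proof (rule comp_smooth[where q' = "\<lambda>x. (c + d) + (-2) * x" and H = "{\<lambda>x. x}"])
    show "((\<lambda>t. (t - c) * (d - t)) has_real_derivative c + d + - 2 * x) (at x)" for x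
      by (auto intro!: derivative_eq_intros simp: algebra_simps)
    show "(\<lambda>x. c + d + - 2 * x) \<in> falg {\<lambda>x. x}"
      by (intro falg.add falg.mult falg.const id)
    show "\<forall>g\<in>{\<lambda>x. x}. \<exists>g'\<in>falg {\<lambda>x. x}. \<forall>x. (g has_real_derivative g' x) (at x)"
      by (auto intro!: bexI[of _ "\<lambda>_. 1"] falg.const)
  qed
  then show ?thesis by (simp add: lbump_def[abs_def])
qed

lemma lbump_nonneg: "lbump c d t \<ge> 0" by (simp add: lbump_def flat_nonneg)

lemma lbump_support: "c < d \<Longrightarrow> lbump c d t \<noteq> 0 \<Longrightarrow> t \<in> {c<..<d}"
  unfolding lbump_def flat_def
  by (auto split: if_splits simp: zero_less_mult_iff)

lemma lbump_mid: "c < d \<Longrightarrow> lbump c d ((c + d) / 2) > 0"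
proof -
  assume "c < d"
  then have "((c + d) / 2 - c) * (d - (c + d) / 2) > 0" by (intro mult_pos_pos) auto
  then show ?thesis unfolding lbump_def by (intro flat_pos)
qed

lemma lbump_cont: "continuous_on UNIV (lbump c d)"
  using smooth_continuous[OF lbump_smooth] .

definition cbump :: "real \<Rightarrow> real \<Rightarrow> real \<Rightarrow> real \<Rightarrow> real" where
  "cbump T m e t = flat 0 (cos (2 * pi / T * (t - m)) - cos (2 * pi / T * e))"

lemma cbump_smooth: "smooth_fun (cbump T m e)"
proof -
  define w where "w = 2 * pi / T"
  define H where "H = {\<lambda>t. sin (w * (t - m)), \<lambda>t. cos (w * (t - m))}"
  have sn: "(\<lambda>t. sin (w * (t - m))) \<in> falg H" and cs: "(\<lambda>t. cos (w * (t - m))) \<in> falg H"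
    by (auto intro: falg.gen simp: H_def)
  have "smooth_fun (\<lambda>t. flat 0 (cos (w * (t - m)) - cos (w * e)))"
  proof (rule comp_smooth[where q' = "\<lambda>x. (- w) * sin (w * (x - m))" and H = H])
    show "((\<lambda>t. cos (w * (t - m)) - cos (w * e)) has_real_derivative (- w) * sin (w * (x - m))) (at x)" for x
      by (auto intro!: derivative_eq_intros simp: algebra_simps)
    show "(\<lambda>x. (- w) * sin (w * (x - m))) \<in> falg H"
      by (intro falg.mult falg.const sn)
    show "\<forall>g\<in>H. \<exists>g'\<in>falg H. \<forall>x. (g has_real_derivative g' x) (at x)"
    proof
      fix g assume "g \<in> H"
      then consider "g = (\<lambda>t. sin (w * (t - m)))" | "g = (\<lambda>t. cos (w * (t - m)))" by (auto simp: H_def)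
      then show "\<exists>g'\<in>falg H. \<forall>x. (g has_real_derivative g' x) (at x)"
      proof cases
        case 1
        have "(\<lambda>x. w * cos (w * (x - m))) \<in> falg H" by (intro falg.mult falg.const cs)
        moreover have "\<forall>x. (g has_real_derivative w * cos (w * (x - m))) (at x)"
          unfolding 1 by (auto intro!: derivative_eq_intros)
        ultimately show ?thesis by (intro bexI[of _ "\<lambda>x. w * cos (w * (x - m))"])
      next
        case 2
        have "(\<lambda>x. (- w) * sin (w * (x - m))) \<in> falg H" by (intro falg.mult falg.const sn)
        moreover have "\<forall>x. (g has_real_derivative (- w) * sin (w * (x - m))) (at x)"
          unfolding 2 by (auto intro!: derivative_eq_intros)
        ultimately show ?thesis by (intro bexI[of _ "\<lambda>x. (- w) * sin (w * (x - m))"])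
      qed
    qed
  qed
  then show ?thesis by (simp add: cbump_def[abs_def] w_def)
qed

lemma cbump_nonneg: "cbump T m e t \<ge> 0" by (simp add: cbump_def flat_nonneg)

lemma cbump_periodic:
  assumes "T > 0" shows "cbump T m e (t + T) = cbump T m e t"
proof -
  have "2 * pi / T * (t + T - m) = 2 * pi / T * ((t - m) + T)" by simp
  also have "\<dots> = 2 * pi / T * (t - m) + 2 * pi / T * T" by (rule distrib_left)
  finally have "2 * pi / T * (t + T - m) = 2 * pi / T * (t - m) + 2 * pi" using assms by simp
  then show ?thesis by (simp add: cbump_def)
qed

lemma pi_aux_le: assumes "T>0" "x \<le> T / 2" "0 \<le> x" shows "2 * pi / T * x \<le> pi"
proof -
  have "2 * x / T \<le> 1" using assms by (simp add: divide_le_eq)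
  then have "pi * (2 * x / T) \<le> pi * 1" by (intro mult_left_mono) auto
  moreover have "2 * pi / T * x = pi * (2 * x / T)" by simp
  ultimately show ?thesis by linarith
qed

lemma pi_aux_less: assumes "T>0" "x < T / 2" shows "2 * pi / T * x < pi"
proof -
  have "2 * x / T < 1" using assms by (simp add: divide_less_eq)
  then have "pi * (2 * x / T) < pi * 1" by (intro mult_strict_left_mono) auto
  moreover have "2 * pi / T * x = pi * (2 * x / T)" by simp
  ultimately show ?thesis by linarith
qed

lemma cbump_mid:
  assumes "T > 0" "0 < e" "e < T / 2" shows "cbump T m e m > 0"
proof -
  have a: "0 < 2 * pi / T * e" using assms by simp
  have b: "2 * pi / T * e < pi" using assms by (intro pi_aux_less) auto
  have "cos (2 * pi / T * e) < cos 0"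
    by (rule cos_monotone_0_pi) (use a b in auto)
  then show ?thesis unfolding cbump_def by (intro flat_pos) simp
qed

lemma cbump_zero:
  assumes "T > 0" "0 < e" "\<bar>t - m\<bar> \<le> T / 2" "e \<le> \<bar>t - m\<bar>" shows "cbump T m e t = 0"
proof -
  have "cos (2 * pi / T * (t - m)) = cos (2 * pi / T * \<bar>t - m\<bar>)"
  proof (cases "t - m \<ge> 0")
    case False
    then have "\<bar>t - m\<bar> = - (t - m)" by simp
    then show ?thesis by (metis cos_minus mult_minus_right)
  qed simp
  also have "\<dots> \<le> cos (2 * pi / T * e)"
  proof (rule cos_monotone_0_pi_le)
    show "0 \<le> 2 * pi / T * e" using assms by simp
    show "2 * pi / T * e \<le> 2 * pi / T * \<bar>t - m\<bar>" using assms by (intro mult_left_mono) auto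
    show "2 * pi / T * \<bar>t - m\<bar> \<le> pi" using assms by (intro pi_aux_le) auto
  qed
  finally show ?thesis unfolding cbump_def by (intro flat_zero) simp
qed

lemma cbump_cont: "continuous_on UNIV (cbump T m e)"
  using smooth_continuous[OF cbump_smooth] .


lemma fund:
  fixes F :: "real \<Rightarrow> 'a::real_inner"
  assumes cont: "continuous_on {\<alpha>..\<beta>} F" and ab: "\<alpha> < \<beta>" and dpos: "\<delta> > 0"
    and H: "\<And>c d. \<alpha> \<le> c \<Longrightarrow> c < d \<Longrightarrow> d \<le> \<beta> \<Longrightarrow> d - c < \<delta> \<Longrightarrow>
      \<exists>\<psi>. continuous_on {c..d} \<psi> \<and> (\<forall>u\<in>{c..d}. \<psi> u \<ge> 0) \<and> \<psi> ((c+d)/2) > 0 \<and>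
        (\<forall>v. integral {c..d} (\<lambda>u. (F u \<bullet> v) * \<psi> u) = 0)"
    and t: "t \<in> {\<alpha>..\<beta>}"
  shows "F t = 0"
proof (rule ccontr)
  assume nz: "F t \<noteq> 0"
  define v where "v = F t"
  define g where "g u = F u \<bullet> v" for u
  have gc: "continuous_on {\<alpha>..\<beta>} g" unfolding g_def by (intro continuous_intros cont)
  have gt: "g t > 0" using nz by (simp add: g_def v_def)
  obtain r where r: "r > 0" "\<And>u. u \<in> {\<alpha>..\<beta>} \<Longrightarrow> dist u t < r \<Longrightarrow> dist (g u) (g t) < g t"
    using gc t gt unfolding continuous_on_iff by metis
  have gpos: "g u > 0" if "u \<in> {\<alpha>..\<beta>}" "\<bar>u - t\<bar> < r" for u
    using r(2)[OF that(1)] that(2) by (auto simp: dist_real_def)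
  define r' where "r' = min (r/2) (\<delta>/3)"
  have r'pos: "r' > 0" using r dpos by (simp add: r'_def)
  define c where "c = max \<alpha> (t - r')"
  define d where "d = min \<beta> (t + r')"
  have cd: "\<alpha> \<le> c" "c < d" "d \<le> \<beta>" "d - c < \<delta>"
    using t ab r'pos unfolding c_def d_def r'_def by (auto simp: min_def max_def)
  have gcd: "g u > 0" if "u \<in> {c..d}" for u
    using that r'pos r unfolding c_def d_def r'_def
    by (intro gpos) (auto simp: abs_if)
  obtain \<psi> where \<psi>: "continuous_on {c..d} \<psi>" "\<forall>u\<in>{c..d}. \<psi> u \<ge> 0" "\<psi> ((c+d)/2) > 0"
    "\<forall>v. integral {c..d} (\<lambda>u. (F u \<bullet> v) * \<psi> u) = 0"
    using H[OF cd] by blast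
  define k where "k u = g u * \<psi> u" for u
  have kc: "continuous_on {c..d} k"
    unfolding k_def by (intro continuous_intros \<psi>(1) continuous_on_subset[OF gc]) (use cd in auto)
  have "(k has_integral 0) {c..d}"
    using integrable_continuous_real[OF kc] \<psi>(4) unfolding k_def g_def
    by (metis has_integral_integral)
  moreover have "0 \<le> k x" if "x \<in> box c d" for x
    using that \<psi>(2) gcd[of x] unfolding k_def by (auto intro!: mult_nonneg_nonneg less_imp_le)
  ultimately have "k ((c+d)/2) = 0"
    using has_integral_0_cbox_imp_0[of c d k "(c+d)/2"] kc cd by auto
  moreover have "k ((c+d)/2) > 0"
    unfolding k_def using gcd[of "(c+d)/2"] \<psi>(3) cd by auto
  ultimately show False by simp
qed


lemma integral_shrink:
  fixes f :: "real \<Rightarrow> 'a::banach"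
  assumes "{c'..d'} \<subseteq> {c..d}" "\<And>x. x \<in> {c..d} \<Longrightarrow> x \<notin> {c'..d'} \<Longrightarrow> f x = 0"
    "f integrable_on {c'..d'}"
  shows "integral {c..d} f = integral {c'..d'} f"
proof -
  define g where "g x = (if x \<in> {c'..d'} then f x else 0)" for x
  have "(f has_integral integral {c'..d'} f) {c'..d'}" using assms(3) by blast
  then have "(g has_integral integral {c'..d'} f) {c'..d'}"
    by (rule has_integral_eq[rotated]) (simp add: g_def)
  then have "(g has_integral integral {c'..d'} f) {c..d}"
    by (rule has_integral_on_superset) (use assms(1) in \<open>auto simp: g_def\<close>)
  then have "(f has_integral integral {c'..d'} f) {c..d}"
    by (rule has_integral_eq[rotated]) (use assms(2) in \<open>auto simp: g_def\<close>)
  then show ?thesis by blast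
qed

lemma periodic_int:
  fixes f :: "real \<Rightarrow> 'a"
  assumes "\<forall>x. f (x + T) = f x"
  shows "f (x + real_of_int k * T) = f x"
proof -
  have nat: "f (x + real n * T) = f x" for n x
    by (induction n) (auto simp: algebra_simps assms[rule_format, of "x + real _ * T", simplified algebra_simps])
  show ?thesis
  proof (cases "k \<ge> 0")
    case True
    then obtain n where "k = int n" by (metis nonneg_eq_int)
    then show ?thesis using nat by simp
  next
    case False
    then obtain n where "k = - int n" by (metis neg_int_cases less_imp_le not_le minus_minus)
    then show ?thesis using nat[of "x - real n * T" n] by simp
  qed
qed

lemma window_int:
  fixes f :: "real \<Rightarrow> 'a::banach"
  assumes T: "T > 0" and per: "\<forall>x. f (x + T) = f x" and cont: "continuous_on UNIV f"
  shows "integral {a..a+T} f = integral {0..T} f"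
proof -
  have intg: "f integrable_on {u..v}" for u v
    by (rule integrable_continuous_real) (rule continuous_on_subset[OF cont], simp)
  have base: "integral {b..b+T} f = integral {0..T} f" if b: "0 \<le> b" "b \<le> T" for b
  proof -
    have fT: "(\<lambda>x. f (x + T)) = f" using per by auto
    have "integral {0..b} f = integral {T..b+T} f"
      using integral_shift_real_ivl[of T T "b+T" f] fT by simp
    moreover have "integral {b..T} f + integral {T..b+T} f = integral {b..b+T} f"
      by (rule Henstock_Kurzweil_Integration.integral_combine) (use b T intg in auto)
    moreover have "integral {0..b} f + integral {b..T} f = integral {0..T} f"
      by (rule Henstock_Kurzweil_Integration.integral_combine) (use b T intg in auto)
    ultimately show ?thesis by (metis add.commute)
  qed
  define k where "k = \<lfloor>a / T\<rfloor>"
  define b where "b = a - real_of_int k * T"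
  have b: "0 \<le> b" "b \<le> T"
  proof -
    have "real_of_int k \<le> a / T" "a / T < real_of_int k + 1" unfolding k_def by linarith+
    then have "real_of_int k * T \<le> a" "a < (real_of_int k + 1) * T" using T by (auto simp: field_simps)
    then show "0 \<le> b" "b \<le> T" unfolding b_def by (auto simp: algebra_simps)
  qed
  have fk: "(\<lambda>x. f (x + real_of_int k * T)) = f" using periodic_int[OF per] by auto
  have "integral {a..a+T} f = integral {b..b+T} (\<lambda>x. f (x + real_of_int k * T))"
    using integral_shift_real_ivl[of a "real_of_int k * T" "a+T" f] unfolding b_def by (simp add: algebra_simps)
  also have "\<dots> = integral {b..b+T} f" using fk by simp
  finally show ?thesis using base[OF b] by simp
qed

lemma periodic_shift_int:
  fixes f :: "real \<Rightarrow> 'a::banach"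
  assumes T: "T > 0" and per: "\<forall>x. f (x + T) = f x" and cont: "continuous_on UNIV f"
  shows "integral {0..T} (\<lambda>x. f (x + c)) = integral {0..T} f"
proof -
  have "integral {0..T} (\<lambda>x. f (x + c)) = integral {c..c+T} f"
    using integral_shift_real_ivl[of c c "c+T" f] by simp
  then show ?thesis using window_int[OF assms] by simp
qed


lemma sym_inner:
  fixes M :: "real^'n^'n"
  assumes "transpose M = M"
  shows "(M *v x) \<bullet> z = (M *v z) \<bullet> x"
proof -
  have "(M *v z) \<bullet> x = x \<bullet> (M *v z)" by (rule inner_commute)
  also have "\<dots> = (x v* M) \<bullet> z" by (rule dot_lmul_matrix[symmetric])
  also have "\<dots> = (transpose M *v x) \<bullet> z" by (simp add: transpose_matrix_vector)
  finally show ?thesis using assms by simp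
qed

lemma quad_expand:
  fixes M :: "real^'n^'n"
  assumes "transpose M = M"
  shows "(M *v (Y + e *\<^sub>R W)) \<bullet> (Y + e *\<^sub>R W) =
    (M *v Y) \<bullet> Y + 2 * e * ((M *v Y) \<bullet> W) + e^2 * ((M *v W) \<bullet> W)"
proof -
  have s: "(M *v W) \<bullet> Y = (M *v Y) \<bullet> W" using sym_inner[OF assms] by simp
  show ?thesis
    by (simp add: matrix_vector_right_distrib matrix_vector_mult_scaleR inner_add_left
        inner_add_right s power2_eq_square algebra_simps)
qed

lemma U_deriv:
  assumes Ud: "\<forall>x. (U has_derivative (\<lambda>v. G x \<bullet> v)) (at x)"
  shows "((\<lambda>e. U (p + e *\<^sub>R q)) has_real_derivative G (p + e *\<^sub>R q) \<bullet> q) (at e)"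
proof -
  have f: "((\<lambda>e. p + e *\<^sub>R q) has_derivative (\<lambda>x. x *\<^sub>R q)) (at e)"
    by (auto intro!: derivative_eq_intros)
  have "(U \<circ> (\<lambda>e. p + e *\<^sub>R q) has_derivative (\<lambda>v. G (p + e *\<^sub>R q) \<bullet> v) \<circ> (\<lambda>x. x *\<^sub>R q)) (at e)"
    by (rule diff_chain_at[OF f]) (use Ud in auto)
  moreover have "(\<lambda>v. G (p + e *\<^sub>R q) \<bullet> v) \<circ> (\<lambda>x. x *\<^sub>R q) = (*) (G (p + e *\<^sub>R q) \<bullet> q)"
    by (auto simp: fun_eq_iff)
  ultimately show ?thesis unfolding has_field_derivative_def by (simp add: o_def)
qed

context
  fixes s :: nat and A :: "nat \<Rightarrow> real^'n^'n" and h :: real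
    and U :: "real^'n \<Rightarrow> real" and G :: "real^'n \<Rightarrow> real^'n"
  assumes symA: "\<forall>j\<in>{1..s div 2}. transpose (A j) = A j"
    and hpos: "h > 0"
    and Ud: "\<forall>x. (U has_derivative (\<lambda>v. G x \<bullet> v)) (at x)"
    and Gc: "continuous_on UNIV G"
begin

definition fx :: "(real \<Rightarrow> real^'n) \<Rightarrow> (real \<Rightarrow> real^'n) \<Rightarrow> real \<Rightarrow> real \<Rightarrow> real" where
  "fx y dy e t = 1 / h^2 * (\<Sum>j = 1..s div 2.
      (A j *v (y (t + real j * h) - y t)) \<bullet> (dy (t + real j * h) - dy t)
      + e * ((A j *v (dy (t + real j * h) - dy t)) \<bullet> (dy (t + real j * h) - dy t)))
    + G (y t + e *\<^sub>R dy t) \<bullet> dy t"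

lemma Ld_expand:
  "LDelta s A h U (\<lambda>t. y t + e *\<^sub>R dy t) t =
    1 / (2 * h^2) * (\<Sum>j = 1..s div 2.
      (A j *v (y (t + real j * h) - y t)) \<bullet> (y (t + real j * h) - y t)
      + 2 * e * ((A j *v (y (t + real j * h) - y t)) \<bullet> (dy (t + real j * h) - dy t))
      + e^2 * ((A j *v (dy (t + real j * h) - dy t)) \<bullet> (dy (t + real j * h) - dy t)))
    + U (y t + e *\<^sub>R dy t)"
proof -
  have eq: "y (t + real j * h) + e *\<^sub>R dy (t + real j * h) - (y t + e *\<^sub>R dy t) =
        (y (t + real j * h) - y t) + e *\<^sub>R (dy (t + real j * h) - dy t)" for j
    by (simp add: algebra_simps)
  have "(A j *v (y (t + real j * h) + e *\<^sub>R dy (t + real j * h) - (y t + e *\<^sub>R dy t))) \<bullet>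
        (y (t + real j * h) + e *\<^sub>R dy (t + real j * h) - (y t + e *\<^sub>R dy t)) =
      (A j *v (y (t + real j * h) - y t)) \<bullet> (y (t + real j * h) - y t)
      + 2 * e * ((A j *v (y (t + real j * h) - y t)) \<bullet> (dy (t + real j * h) - dy t))
      + e^2 * ((A j *v (dy (t + real j * h) - dy t)) \<bullet> (dy (t + real j * h) - dy t))"
    if "j \<in> {1..s div 2}" for j
    unfolding eq by (rule quad_expand) (use symA that in auto)
  then show ?thesis
    unfolding LDelta_def by (intro arg_cong2[where f="(+)"] arg_cong2[where f="(*)"] refl sum.cong) auto
qed

lemma Ld_deriv:
  "((\<lambda>e. LDelta s A h U (\<lambda>t. y t + e *\<^sub>R dy t) t) has_real_derivative fx y dy e t) (at e)"
proof -
  let ?a = "\<lambda>j. (A j *v (y (t + real j * h) - y t)) \<bullet> (y (t + real j * h) - y t)"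
  let ?b = "\<lambda>j. (A j *v (y (t + real j * h) - y t)) \<bullet> (dy (t + real j * h) - dy t)"
  let ?c = "\<lambda>j. (A j *v (dy (t + real j * h) - dy t)) \<bullet> (dy (t + real j * h) - dy t)"
  have d1: "((\<lambda>e. \<Sum>j = 1..s div 2. ?a j + 2 * e * ?b j + e^2 * ?c j) has_real_derivative
        (\<Sum>j = 1..s div 2. 2 * ?b j + 2 * e * ?c j)) (at e)"
    by (rule DERIV_sum) (auto intro!: derivative_eq_intros)
  have "((\<lambda>e. 1 / (2 * h^2) * (\<Sum>j = 1..s div 2. ?a j + 2 * e * ?b j + e^2 * ?c j) + U (y t + e *\<^sub>R dy t))
     has_real_derivative 1 / (2 * h^2) * (\<Sum>j = 1..s div 2. 2 * ?b j + 2 * e * ?c j) + G (y t + e *\<^sub>R dy t) \<bullet> dy t) (at e)"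
    by (intro DERIV_add DERIV_cmult d1 U_deriv[OF Ud])
  moreover have "(\<Sum>j = 1..s div 2. 2 * ?b j + 2 * e * ?c j) = 2 * (\<Sum>j = 1..s div 2. ?b j + e * ?c j)"
    by (simp add: sum_distrib_left algebra_simps)
  moreover have "1 / (2 * h^2) * (2 * X) = 1 / h^2 * X" for X :: real by simp
  ultimately show ?thesis unfolding Ld_expand fx_def by metis
qed


lemma Uc: "continuous_on UNIV U"
  using Ud by (meson continuous_at_imp_continuous_on has_derivative_continuous)

lemma shift_cont:
  assumes yc: "continuous_on {c..d + real (s div 2) * h} y" and j: "j \<le> s div 2"
  shows "continuous_on (S \<times> {c..d}) (\<lambda>p. y (snd p + real j * h))"
proof (rule continuous_on_compose2[OF yc])
  show "continuous_on (S \<times> {c..d}) (\<lambda>p. snd p + real j * h)" by (intro continuous_intros)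
  have "real j * h \<le> real (s div 2) * h" using j hpos by (intro mult_right_mono) auto
  moreover have "0 \<le> real j * h" using hpos by simp
  ultimately show "(\<lambda>p. snd p + real j * h) ` (S \<times> {c..d}) \<subseteq> {c..d + real (s div 2) * h}"
    by auto
qed

lemma shift_cont0:
  assumes yc: "continuous_on {c..d + real (s div 2) * h} y"
  shows "continuous_on (S \<times> {c..d}) (\<lambda>p. y (snd p))"
  using shift_cont[OF yc, of 0] by simp

lemma fx_cont:
  assumes yc: "continuous_on {c..d + real (s div 2) * h} y" and dyc: "continuous_on UNIV dy"
  shows "continuous_on (UNIV \<times> {c..d}) (\<lambda>(e, t). fx y dy e t)"
proof -
  have dyc': "continuous_on S (\<lambda>p. dy (f p))" if "continuous_on S f" for S f
    by (rule continuous_on_compose2[OF dyc that]) auto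
  have Gc': "continuous_on S (\<lambda>p. G (f p))" if "continuous_on S f" for S f
    by (rule continuous_on_compose2[OF Gc that]) auto
  note mv = bounded_linear.continuous_on[OF matrix_vector_mul_bounded_linear]
  show ?thesis
    unfolding split_beta fx_def
    by (intro continuous_intros dyc' Gc' mv shift_cont[OF yc] shift_cont0[OF yc]) auto
qed

lemma Ld_cont:
  assumes yc: "continuous_on {c..d + real (s div 2) * h} y" and dyc: "continuous_on UNIV dy"
  shows "continuous_on {c..d} (LDelta s A h U (\<lambda>t. y t + e *\<^sub>R dy t))"
proof -
  have dyc': "continuous_on S (\<lambda>p. dy (f p))" if "continuous_on S f" for S f
    by (rule continuous_on_compose2[OF dyc that]) auto
  have Uc': "continuous_on S (\<lambda>p. U (f p))" if "continuous_on S f" for S f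
    by (rule continuous_on_compose2[OF Uc that]) auto
  note mv = bounded_linear.continuous_on[OF matrix_vector_mul_bounded_linear]
  have "continuous_on ({0::real} \<times> {c..d}) (\<lambda>p. LDelta s A h U (\<lambda>t. y t + e *\<^sub>R dy t) (snd p))"
    unfolding LDelta_def
    by (intro continuous_intros dyc' Uc' mv shift_cont[OF yc] shift_cont0[OF yc]) auto
  moreover have "continuous_on {c..d} (\<lambda>t. (0::real, t))" by (intro continuous_intros)
  moreover have "(\<lambda>t. (0::real, t)) ` {c..d} \<subseteq> {0} \<times> {c..d}" by auto
  ultimately have "continuous_on {c..d} (\<lambda>t. LDelta s A h U (\<lambda>t. y t + e *\<^sub>R dy t) (snd (0::real, t)))"
    by (rule continuous_on_compose2)
  then show ?thesis by simp
qed

lemma deriv_action: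
  assumes yc: "continuous_on {c..d + real (s div 2) * h} y" and dyc: "continuous_on UNIV dy"
  shows "((\<lambda>e. integral {c..d} (LDelta s A h U (\<lambda>t. y t + e *\<^sub>R dy t))) has_real_derivative
            integral {c..d} (fx y dy 0)) (at 0)"
proof -
  have "((\<lambda>e. integral (cbox c d) (LDelta s A h U (\<lambda>t. y t + e *\<^sub>R dy t))) has_real_derivative
            integral (cbox c d) (fx y dy 0)) (at 0 within UNIV)"
  proof (rule leibniz_rule_field_derivative)
    show "((\<lambda>e. LDelta s A h U (\<lambda>t. y t + e *\<^sub>R dy t) t) has_real_derivative fx y dy e t) (at e within UNIV)"
      for e t using Ld_deriv by simp
    show "LDelta s A h U (\<lambda>t. y t + e *\<^sub>R dy t) integrable_on cbox c d" for e
      using integrable_continuous_real[OF Ld_cont[OF yc dyc]] by simp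
    show "continuous_on (UNIV \<times> cbox c d) (\<lambda>(e, t). fx y dy e t)"
      using fx_cont[OF yc dyc] by simp
  qed auto
  then show ?thesis by simp
qed


lemma int_fx0_zero:
  assumes yc: "continuous_on {c..d + real (s div 2) * h} y" and dyc: "continuous_on UNIV dy"
    and lim: "((\<lambda>e. (integral {c..d} (LDelta s A h U (\<lambda>t. y t + e *\<^sub>R dy t)) -
                 integral {c..d} (LDelta s A h U y)) / e) \<longlongrightarrow> 0) (at 0)"
  shows "integral {c..d} (fx y dy 0) = 0"
proof -
  have "((\<lambda>e. (integral {c..d} (LDelta s A h U (\<lambda>t. y t + e *\<^sub>R dy t)) -
                 integral {c..d} (LDelta s A h U (\<lambda>t. y t + 0 *\<^sub>R dy t))) / (e - 0))
        \<longlongrightarrow> integral {c..d} (fx y dy 0)) (at 0)"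
    using deriv_action[OF yc dyc] unfolding has_field_derivative_iff .
  then have "((\<lambda>e. (integral {c..d} (LDelta s A h U (\<lambda>t. y t + e *\<^sub>R dy t)) -
                 integral {c..d} (LDelta s A h U y)) / e)
        \<longlongrightarrow> integral {c..d} (fx y dy 0)) (at 0)" by simp
  from tendsto_unique[OF _ this lim] show ?thesis by simp
qed

definition Pj where "Pj y dy j t = (A j *v (y (t + real j * h) - y t)) \<bullet> dy (t + real j * h)"
definition Qj where "Qj y dy j t = (A j *v (y (t + real j * h) - y t)) \<bullet> dy t"
definition Pj' where "Pj' y dy j t = (A j *v (y t - y (t - real j * h))) \<bullet> dy t"
definition Kf where "Kf y dy t = G (y t) \<bullet> dy t"
definition EL where "EL y t = (\<Sum>j = 1..s div 2. A j *v (y (t - real j * h) - 2 *\<^sub>R y t + y (t + real j * h)))"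
definition Rf where "Rf y dy t = (G (y t) - (1 / h^2) *\<^sub>R EL y t) \<bullet> dy t"

lemma fx0_eq: "fx y dy 0 t = 1 / h^2 * (\<Sum>j = 1..s div 2. Pj y dy j t - Qj y dy j t) + Kf y dy t"
  unfolding fx_def Pj_def Qj_def Kf_def by (simp add: inner_diff_right)

lemma Rf_eq: "Rf y dy t = 1 / h^2 * (\<Sum>j = 1..s div 2. Pj' y dy j t - Qj y dy j t) + Kf y dy t"
proof -
  have "Pj' y dy j t - Qj y dy j t = - ((A j *v (y (t - real j * h) - 2 *\<^sub>R y t + y (t + real j * h))) \<bullet> dy t)" for j
    unfolding Pj'_def Qj_def
    by (simp add: matrix_vector_mult_diff_distrib matrix_vector_right_distrib matrix_vector_mult_scaleR
        inner_diff_left inner_add_left algebra_simps)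
  then have "(\<Sum>j = 1..s div 2. Pj' y dy j t - Qj y dy j t) = - (EL y t \<bullet> dy t)"
    unfolding EL_def by (simp add: inner_sum_left sum_negf)
  then show ?thesis unfolding Rf_def Kf_def by (simp add: inner_diff_left algebra_simps)
qed

lemma combine:
  assumes iI: "\<And>j. j \<in> {1..s div 2} \<Longrightarrow> Pj y dy j integrable_on I \<and> Qj y dy j integrable_on I"
    "Kf y dy integrable_on I"
    and iJ: "\<And>j. j \<in> {1..s div 2} \<Longrightarrow> Pj' y dy j integrable_on J \<and> Qj y dy j integrable_on J"
    "Kf y dy integrable_on J"
    and eP: "\<And>j. j \<in> {1..s div 2} \<Longrightarrow> integral I (Pj y dy j) = integral J (Pj' y dy j)"
    and eQ: "\<And>j. j \<in> {1..s div 2} \<Longrightarrow> integral I (Qj y dy j) = integral J (Qj y dy j)"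
    and eK: "integral I (Kf y dy) = integral J (Kf y dy)"
  shows "integral I (fx y dy 0) = integral J (Rf y dy)"
proof -
  have sI: "(\<lambda>t. \<Sum>j = 1..s div 2. Pj y dy j t - Qj y dy j t) integrable_on I"
    using iI by (intro integrable_sum integrable_diff) auto
  have sJ: "(\<lambda>t. \<Sum>j = 1..s div 2. Pj' y dy j t - Qj y dy j t) integrable_on J"
    using iJ by (intro integrable_sum integrable_diff) auto
  have "integral I (fx y dy 0) = integral I (\<lambda>t. 1 / h^2 * (\<Sum>j = 1..s div 2. Pj y dy j t - Qj y dy j t)) + integral I (Kf y dy)"
    unfolding fx0_eq by (rule Henstock_Kurzweil_Integration.integral_add[OF integrable_on_mult_right[OF sI] iI(2)])
  also have "\<dots> = 1 / h^2 * (\<Sum>j = 1..s div 2. integral I (\<lambda>t. Pj y dy j t - Qj y dy j t)) + integral I (Kf y dy)"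
    unfolding integral_mult_right using iI by (subst integral_sum) (auto intro!: integrable_diff)
  also have "\<dots> = 1 / h^2 * (\<Sum>j = 1..s div 2. integral I (Pj y dy j) - integral I (Qj y dy j)) + integral I (Kf y dy)"
    using iI by (simp add: integral_diff)
  also have "\<dots> = 1 / h^2 * (\<Sum>j = 1..s div 2. integral J (Pj' y dy j) - integral J (Qj y dy j)) + integral J (Kf y dy)"
    using eP eQ eK by simp
  also have "\<dots> = 1 / h^2 * (\<Sum>j = 1..s div 2. integral J (\<lambda>t. Pj' y dy j t - Qj y dy j t)) + integral J (Kf y dy)"
    using iJ by (simp add: integral_diff)
  also have "\<dots> = integral J (\<lambda>t. 1 / h^2 * (\<Sum>j = 1..s div 2. Pj' y dy j t - Qj y dy j t)) + integral J (Kf y dy)"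
    unfolding integral_mult_right using iJ by (subst integral_sum) (auto intro!: integrable_diff)
  also have "\<dots> = integral J (Rf y dy)"
    unfolding Rf_eq by (rule Henstock_Kurzweil_Integration.integral_add[OF integrable_on_mult_right[OF sJ] iJ(2), symmetric])
  finally show ?thesis .
qed

lemma cshift:
  assumes "continuous_on S (y::real \<Rightarrow> 'b::topological_space)" "\<forall>t\<in>T. t + a \<in> S"
  shows "continuous_on T (\<lambda>t. y (t + a))"
  by (rule continuous_on_compose2[OF assms(1)]) (use assms(2) in \<open>auto intro!: continuous_intros\<close>)

lemma PQ_cont:
  assumes yc: "continuous_on S y" and dyc: "continuous_on UNIV dy" and TS: "T \<subseteq> S"
    and sh: "\<forall>t\<in>T. t + real j * h \<in> S"
  shows "continuous_on T (Pj y dy j)" "continuous_on T (Qj y dy j)"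
proof -
  have y0: "continuous_on T y" using continuous_on_subset[OF yc TS] .
  have y1: "continuous_on T (\<lambda>t. y (t + real j * h))" by (rule cshift[OF yc sh])
  have d1: "continuous_on T (\<lambda>t. dy (t + real j * h))" by (rule cshift[OF dyc]) auto
  have d0: "continuous_on T dy" using continuous_on_subset[OF dyc] by auto
  note mv = bounded_linear.continuous_on[OF matrix_vector_mul_bounded_linear]
  show "continuous_on T (Pj y dy j)" unfolding Pj_def by (intro continuous_intros mv y0 y1 d1)
  show "continuous_on T (Qj y dy j)" unfolding Qj_def by (intro continuous_intros mv y0 y1 d0)
qed

lemma P'_cont:
  assumes yc: "continuous_on S y" and dyc: "continuous_on UNIV dy" and TS: "T \<subseteq> S"
    and sh: "\<forall>t\<in>T. t - real j * h \<in> S"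
  shows "continuous_on T (Pj' y dy j)"
proof -
  have y0: "continuous_on T y" using continuous_on_subset[OF yc TS] .
  have y1: "continuous_on T (\<lambda>t. y (t + - (real j * h)))" by (rule cshift[OF yc]) (use sh in auto)
  have d0: "continuous_on T dy" using continuous_on_subset[OF dyc] by auto
  note mv = bounded_linear.continuous_on[OF matrix_vector_mul_bounded_linear]
  show "continuous_on T (Pj' y dy j)" unfolding Pj'_def using y1
    by (intro continuous_intros mv y0 d0) simp
qed

lemma K_cont:
  assumes yc: "continuous_on S y" and dyc: "continuous_on UNIV dy" and TS: "T \<subseteq> S"
  shows "continuous_on T (Kf y dy)"
proof -
  have y0: "continuous_on T y" using continuous_on_subset[OF yc TS] .
  have d0: "continuous_on T dy" using continuous_on_subset[OF dyc] by auto
  have g: "continuous_on T (\<lambda>t. G (y t))" by (rule continuous_on_compose2[OF Gc y0]) auto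
  show ?thesis unfolding Kf_def by (intro continuous_intros g d0)
qed

lemma Rf_cont:
  assumes yc: "continuous_on S y" and dyc: "continuous_on UNIV dy" and TS: "T \<subseteq> S"
    and sh: "\<And>j. j \<in> {1..s div 2} \<Longrightarrow> \<forall>t\<in>T. t + real j * h \<in> S \<and> t - real j * h \<in> S"
  shows "continuous_on T (Rf y dy)"
proof -
  have "continuous_on T (\<lambda>t. 1 / h^2 * (\<Sum>j = 1..s div 2. Pj' y dy j t - Qj y dy j t) + Kf y dy t)"
    using sh by (intro continuous_intros P'_cont[OF yc dyc TS] PQ_cont(2)[OF yc dyc TS] K_cont[OF yc dyc TS]) auto
  then show ?thesis unfolding Rf_eq[abs_def] .
qed

lemma jh_bounds:
  assumes "j \<le> s div 2"
  shows "0 \<le> real j * h" "real j * h \<le> real (s div 2) * h"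
  using assms hpos by (auto intro!: mult_right_mono)

lemma nonper:
  assumes yc: "continuous_on {c..d + real (s div 2) * h} y" and dyc: "continuous_on UNIV dy"
    and supp: "\<And>t. dy t \<noteq> 0 \<Longrightarrow> t \<in> {c + real (s div 2) * h..d}"
    and lim: "((\<lambda>e. (integral {c..d} (LDelta s A h U (\<lambda>t. y t + e *\<^sub>R dy t)) -
                 integral {c..d} (LDelta s A h U y)) / e) \<longlongrightarrow> 0) (at 0)"
  shows "integral {c + real (s div 2) * h..d} (Rf y dy) = 0"
proof -
  define \<sigma> where "\<sigma> = real (s div 2) * h"
  have \<sigma>: "0 \<le> \<sigma>" unfolding \<sigma>_def using hpos by simp
  note yc' = yc[folded \<sigma>_def]
  have JI: "{c + \<sigma>..d} \<subseteq> {c..d}" using \<sigma> by auto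
  have IS: "{c..d} \<subseteq> {c..d + \<sigma>}" using \<sigma> by auto
  have "integral {c..d} (fx y dy 0) = integral {c + \<sigma>..d} (Rf y dy)"
  proof (rule combine)
    fix j assume j: "j \<in> {1..s div 2}"
    then have jb: "0 \<le> real j * h" "real j * h \<le> \<sigma>" using jh_bounds[of j] by (auto simp: \<sigma>_def)
    have shI: "\<forall>t\<in>{c..d}. t + real j * h \<in> {c..d + \<sigma>}" using jb by auto
    have shJ: "\<forall>t\<in>{c + \<sigma>..d}. t + real j * h \<in> {c..d + \<sigma>}" using jb by auto
    have shJ': "\<forall>t\<in>{c + \<sigma>..d}. t - real j * h \<in> {c..d + \<sigma>}" using jb by auto
    have JS: "{c + \<sigma>..d} \<subseteq> {c..d + \<sigma>}" using \<sigma> by auto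
    show "Pj y dy j integrable_on {c..d} \<and> Qj y dy j integrable_on {c..d}"
      using PQ_cont[OF yc' dyc IS shI] by (auto intro: integrable_continuous_real)
    show "Pj' y dy j integrable_on {c + \<sigma>..d} \<and> Qj y dy j integrable_on {c + \<sigma>..d}"
      using PQ_cont(2)[OF yc' dyc JS shJ] P'_cont[OF yc' dyc JS shJ']
      by (auto intro!: integrable_continuous_real)
    show "integral {c..d} (Qj y dy j) = integral {c + \<sigma>..d} (Qj y dy j)"
    proof (rule integral_shrink[OF JI])
      show "Qj y dy j x = 0" if "x \<notin> {c + \<sigma>..d}" for x
        using supp[of x] that by (cases "dy x = 0") (auto simp: Qj_def \<sigma>_def)
      show "Qj y dy j integrable_on {c + \<sigma>..d}"
        using PQ_cont(2)[OF yc' dyc JS shJ] by (auto intro!: integrable_continuous_real)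
    qed
    have sub: "{c + \<sigma> - real j * h..d - real j * h} \<subseteq> {c..d}" using jb by auto
    have "integral {c..d} (Pj y dy j) = integral {c + \<sigma> - real j * h..d - real j * h} (Pj y dy j)"
    proof (rule integral_shrink[OF sub])
      show "Pj y dy j x = 0" if "x \<notin> {c + \<sigma> - real j * h..d - real j * h}" for x
        using supp[of "x + real j * h"] that by (cases "dy (x + real j * h) = 0") (auto simp: Pj_def \<sigma>_def)
      show "Pj y dy j integrable_on {c + \<sigma> - real j * h..d - real j * h}"
        using PQ_cont(1)[OF yc' dyc IS shI] sub
        by (auto intro!: integrable_continuous_real intro: continuous_on_subset)
    qed
    also have "\<dots> = integral {c + \<sigma>..d} (\<lambda>u. Pj y dy j (u - real j * h))"
      using integral_shift_real_ivl[of "c + \<sigma>" "real j * h" d "\<lambda>u. Pj y dy j (u - real j * h)"] by simp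
    also have "(\<lambda>u. Pj y dy j (u - real j * h)) = Pj' y dy j"
      by (auto simp: fun_eq_iff Pj_def Pj'_def)
    finally show "integral {c..d} (Pj y dy j) = integral {c + \<sigma>..d} (Pj' y dy j)" .
  next
    have JS: "{c + \<sigma>..d} \<subseteq> {c..d + \<sigma>}" using \<sigma> by auto
    show "Kf y dy integrable_on {c..d}" using K_cont[OF yc' dyc IS] by (auto intro: integrable_continuous_real)
    show "Kf y dy integrable_on {c + \<sigma>..d}" using K_cont[OF yc' dyc JS] by (auto intro!: integrable_continuous_real)
    show "integral {c..d} (Kf y dy) = integral {c + \<sigma>..d} (Kf y dy)"
    proof (rule integral_shrink[OF JI])
      show "Kf y dy x = 0" if "x \<notin> {c + \<sigma>..d}" for x
        using supp[of x] that by (cases "dy x = 0") (auto simp: Kf_def \<sigma>_def)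
      show "Kf y dy integrable_on {c + \<sigma>..d}"
        using K_cont[OF yc' dyc JS] by (auto intro!: integrable_continuous_real)
    qed
  qed
  then show ?thesis using int_fx0_zero[OF yc dyc lim] by (simp add: \<sigma>_def)
qed

lemma per:
  assumes T: "T > 0" and yper: "\<forall>t. y (t + T) = y t" and yc: "continuous_on UNIV y"
    and dyper: "\<forall>t. dy (t + T) = dy t" and dyc: "continuous_on UNIV dy"
    and lim: "((\<lambda>e. (integral {0..T} (LDelta s A h U (\<lambda>t. y t + e *\<^sub>R dy t)) -
                 integral {0..T} (LDelta s A h U y)) / e) \<longlongrightarrow> 0) (at 0)"
  shows "integral {0..T} (Rf y dy) = 0"
proof -
  have yc': "continuous_on {0..T + real (s div 2) * h} y" using continuous_on_subset[OF yc] by auto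
  have "integral {0..T} (fx y dy 0) = integral {0..T} (Rf y dy)"
  proof (rule combine)
    fix j assume j: "j \<in> {1..s div 2}"
    have Pc: "continuous_on UNIV (Pj y dy j)" "continuous_on UNIV (Qj y dy j)"
      using PQ_cont[OF yc dyc] by auto
    have P'c: "continuous_on UNIV (Pj' y dy j)" using P'_cont[OF yc dyc] by auto
    show "Pj y dy j integrable_on {0..T} \<and> Qj y dy j integrable_on {0..T}"
      using Pc by (auto intro!: integrable_continuous_real intro: continuous_on_subset)
    show "Pj' y dy j integrable_on {0..T} \<and> Qj y dy j integrable_on {0..T}"
      using Pc P'c by (auto intro!: integrable_continuous_real intro: continuous_on_subset)
    show "integral {0..T} (Qj y dy j) = integral {0..T} (Qj y dy j)" ..
    have pp: "\<forall>x. Pj' y dy j (x + T) = Pj' y dy j x"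
    proof
      fix x
      have "y (x + T - real j * h) = y (x - real j * h)"
        using yper[rule_format, of "x - real j * h"] by (simp add: algebra_simps)
      then show "Pj' y dy j (x + T) = Pj' y dy j x"
        using yper dyper by (simp add: Pj'_def)
    qed
    have "integral {0..T} (\<lambda>x. Pj' y dy j (x + real j * h)) = integral {0..T} (Pj' y dy j)"
      by (rule periodic_shift_int[OF T pp P'c])
    moreover have "(\<lambda>x. Pj' y dy j (x + real j * h)) = Pj y dy j"
      by (auto simp: fun_eq_iff Pj_def Pj'_def)
    ultimately show "integral {0..T} (Pj y dy j) = integral {0..T} (Pj' y dy j)" by simp
  next
    have Kc: "continuous_on UNIV (Kf y dy)" using K_cont[OF yc dyc] by auto
    show "Kf y dy integrable_on {0..T}" "Kf y dy integrable_on {0..T}"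
      using Kc by (auto intro!: integrable_continuous_real intro: continuous_on_subset)
    show "integral {0..T} (Kf y dy) = integral {0..T} (Kf y dy)" ..
  qed
  then show ?thesis using int_fx0_zero[OF yc' dyc lim] by simp
qed

definition Ff where "Ff y u = G (y u) - (1 / h^2) *\<^sub>R EL y u"

lemma Rf_scale: "Rf y (\<lambda>t. \<psi> t *\<^sub>R v) u = (Ff y u \<bullet> v) * \<psi> u"
  unfolding Rf_def Ff_def by simp

lemma Ff_zero_imp: "Ff y t = 0 \<Longrightarrow> EL y t = h^2 *\<^sub>R G (y t)"
  unfolding Ff_def using hpos by (simp add: field_simps)

lemma Ff_cont:
  assumes yc: "continuous_on S y" and TS: "T \<subseteq> S"
    and sh: "\<And>j. j \<in> {1..s div 2} \<Longrightarrow> \<forall>t\<in>T. t + real j * h \<in> S \<and> t - real j * h \<in> S"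
  shows "continuous_on T (Ff y)"
proof -
  have y0: "continuous_on T y" using continuous_on_subset[OF yc TS] .
  have g: "continuous_on T (\<lambda>t. G (y t))" by (rule continuous_on_compose2[OF Gc y0]) auto
  have yp: "continuous_on T (\<lambda>t. y (t + real j * h))" if "j \<in> {1..s div 2}" for j
    by (rule cshift[OF yc]) (use sh[OF that] in auto)
  have ym: "continuous_on T (\<lambda>t. y (t - real j * h))" if "j \<in> {1..s div 2}" for j
    using cshift[OF yc, of T "- (real j * h)"] sh[OF that] by auto
  note mv = bounded_linear.continuous_on[OF matrix_vector_mul_bounded_linear]
  show ?thesis unfolding Ff_def EL_def
    by (intro continuous_intros g mv yp ym y0) auto
qed

lemma circle_case:
  assumes T: "T > 0" and yper: "\<forall>t. y (t + T) = y t" and yc: "continuous_on UNIV y"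
    and H: "\<forall>dy. smooth_fun dy \<and> (\<forall>t. dy (t + T) = dy t) \<longrightarrow>
          ((\<lambda>e. (S_circle s A h U T (\<lambda>t. y t + e *\<^sub>R dy t) - S_circle s A h U T y) / e)
             \<longlongrightarrow> 0) (at 0)"
  shows "EL y t = h^2 *\<^sub>R G (y t)"
proof -
  have Fc: "continuous_on UNIV (Ff y)" by (rule Ff_cont[OF yc]) auto
  have yper': "y (x + T + a) = y (x + a)" for x a
    using yper[rule_format, of "x + a"] by (simp add: algebra_simps)
  have Fper: "Ff y (x + T) = Ff y x" for x
  proof -
    have "y (x + T - b) = y (x - b)" for b using yper'[of x "- b"] by simp
    then show ?thesis unfolding Ff_def EL_def using yper'[of x] yper by simp
  qed
  have "Ff y t = 0"
  proof (rule fund[of "t - 1" "t + 1" "Ff y" T])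
    show "continuous_on {t - 1..t + 1} (Ff y)" using continuous_on_subset[OF Fc] by auto
    show "t - 1 < t + 1" "0 < T" "t \<in> {t - 1..t + 1}" using T by auto
    fix c d assume cd: "t - 1 \<le> c" "c < d" "d \<le> t + 1" "d - c < T"
    define m where "m = (c + d) / 2"
    define \<epsilon> where "\<epsilon> = (d - c) / 2"
    have \<epsilon>: "0 < \<epsilon>" "\<epsilon> < T / 2" using cd by (auto simp: \<epsilon>_def)
    define \<psi> where "\<psi> = cbump T m \<epsilon>"
    show "\<exists>\<psi>. continuous_on {c..d} \<psi> \<and> (\<forall>u\<in>{c..d}. 0 \<le> \<psi> u) \<and> 0 < \<psi> ((c + d) / 2) \<and>
        (\<forall>v. integral {c..d} (\<lambda>u. (Ff y u \<bullet> v) * \<psi> u) = 0)"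
    proof (intro exI[of _ \<psi>] conjI allI ballI)
      show "continuous_on {c..d} \<psi>" unfolding \<psi>_def using continuous_on_subset[OF cbump_cont] by blast
      show "0 \<le> \<psi> u" for u unfolding \<psi>_def by (rule cbump_nonneg)
      show "0 < \<psi> ((c + d) / 2)" unfolding \<psi>_def m_def[symmetric] by (rule cbump_mid[OF T \<epsilon>])
      fix v :: "real^'n"
      define dy where "dy = (\<lambda>t. \<psi> t *\<^sub>R v)"
      have sm: "smooth_fun dy" unfolding dy_def \<psi>_def by (intro smooth_scaleR cbump_smooth)
      have dyper: "\<forall>t. dy (t + T) = dy t" unfolding dy_def \<psi>_def using cbump_periodic[OF T] by simp
      have dyc: "continuous_on UNIV dy" by (rule smooth_continuous[OF sm])
      have lim: "((\<lambda>e. (integral {0..T} (LDelta s A h U (\<lambda>t. y t + e *\<^sub>R dy t)) -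
                 integral {0..T} (LDelta s A h U y)) / e) \<longlongrightarrow> 0) (at 0)"
        using H sm dyper unfolding S_circle_def by blast
      have i0: "integral {0..T} (Rf y dy) = 0" by (rule per[OF T yper yc dyper dyc lim])
      have Rc: "continuous_on UNIV (Rf y dy)" by (rule Rf_cont[OF yc dyc]) auto
      have Rper: "\<forall>x. Rf y dy (x + T) = Rf y dy x"
        unfolding dy_def Rf_scale \<psi>_def using Fper cbump_periodic[OF T] by simp
      have "integral {m - T/2..m - T/2 + T} (Rf y dy) = integral {0..T} (Rf y dy)"
        by (rule window_int[OF T Rper Rc])
      moreover have "integral {m - T/2..m - T/2 + T} (Rf y dy) = integral {c..d} (Rf y dy)"
      proof (rule integral_shrink)
        show "{c..d} \<subseteq> {m - T / 2..m - T / 2 + T}" using cd by (auto simp: m_def field_simps)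
        show "Rf y dy x = 0" if "x \<in> {m - T / 2..m - T / 2 + T}" "x \<notin> {c..d}" for x
        proof -
          have x1: "m - T/2 \<le> x" "x \<le> m + T/2" using that(1) by auto
          have a1: "\<bar>x - m\<bar> \<le> T / 2" unfolding abs_le_iff using x1 by linarith
          have x2: "x < c \<or> d < x" using that(2) by auto
          have a2: "\<epsilon> \<le> \<bar>x - m\<bar>"
          proof (cases "x \<ge> m")
            case True
            then have "\<bar>x - m\<bar> = x - m" by simp
            then show ?thesis using x2 cd True unfolding m_def \<epsilon>_def by (auto simp: field_simps)
          next
            case False
            then have "\<bar>x - m\<bar> = m - x" by simp
            then show ?thesis using x2 cd False unfolding m_def \<epsilon>_def by (auto simp: field_simps)
          qed
          have "\<psi> x = 0" unfolding \<psi>_def by (rule cbump_zero[OF T \<epsilon>(1) a1 a2])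
          then show ?thesis unfolding dy_def Rf_scale by simp
        qed
        show "Rf y dy integrable_on {c..d}"
          using Rc by (auto intro!: integrable_continuous_real intro: continuous_on_subset)
      qed
      ultimately have "integral {c..d} (Rf y dy) = 0" using i0 by simp
      then show "integral {c..d} (\<lambda>u. (Ff y u \<bullet> v) * \<psi> u) = 0"
        unfolding dy_def Rf_scale .
    qed
  qed
  then show ?thesis by (rule Ff_zero_imp)
qed

lemma line_case:
  assumes yc: "continuous_on UNIV y"
    and H: "\<forall>dy. smooth_fun dy \<and> bounded {t. dy t \<noteq> 0} \<longrightarrow>
          ((\<lambda>e. S_line_diff s A h U y (\<lambda>t. y t + e *\<^sub>R dy t) / e) \<longlongrightarrow> 0) (at 0)"
  shows "EL y t = h^2 *\<^sub>R G (y t)"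
proof -
  have Fc: "continuous_on UNIV (Ff y)" by (rule Ff_cont[OF yc]) auto
  define \<sigma> where "\<sigma> = real (s div 2) * h"
  have \<sigma>: "0 \<le> \<sigma>" unfolding \<sigma>_def using hpos by simp
  have "Ff y t = 0"
  proof (rule fund[of "t - 1" "t + 1" "Ff y" 1])
    show "continuous_on {t - 1..t + 1} (Ff y)" using continuous_on_subset[OF Fc] by auto
    show "t - 1 < t + 1" "(0::real) < 1" "t \<in> {t - 1..t + 1}" by auto
    fix c d assume cd: "t - 1 \<le> c" "c < d" "d \<le> t + 1" "d - c < 1"
    define \<psi> where "\<psi> = lbump c d"
    show "\<exists>\<psi>. continuous_on {c..d} \<psi> \<and> (\<forall>u\<in>{c..d}. 0 \<le> \<psi> u) \<and> 0 < \<psi> ((c + d) / 2) \<and>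
        (\<forall>v. integral {c..d} (\<lambda>u. (Ff y u \<bullet> v) * \<psi> u) = 0)"
    proof (intro exI[of _ \<psi>] conjI allI ballI)
      show "continuous_on {c..d} \<psi>" unfolding \<psi>_def using continuous_on_subset[OF lbump_cont] by blast
      show "0 \<le> \<psi> u" for u unfolding \<psi>_def by (rule lbump_nonneg)
      show "0 < \<psi> ((c + d) / 2)" unfolding \<psi>_def by (rule lbump_mid[OF cd(2)])
      fix v :: "real^'n"
      define dy where "dy = (\<lambda>t. \<psi> t *\<^sub>R v)"
      have sm: "smooth_fun dy" unfolding dy_def \<psi>_def by (intro smooth_scaleR lbump_smooth)
      have dyc: "continuous_on UNIV dy" by (rule smooth_continuous[OF sm])
      have supp: "x \<in> {c<..<d}" if "dy x \<noteq> 0" for x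
        using lbump_support[OF cd(2), of x] that unfolding dy_def \<psi>_def by auto
      have bd: "bounded {t. dy t \<noteq> 0}"
        by (rule bounded_subset[OF bounded_closed_interval[of c d]]) (auto dest!: supp)
      define K where "K = {c - \<sigma>..d}"
      have yK: "continuous_on {c - \<sigma>..d + real (s div 2) * h} y" using continuous_on_subset[OF yc] by auto
      have eqL: "S_line_diff s A h U y (\<lambda>t. y t + e *\<^sub>R dy t) =
          integral K (LDelta s A h U (\<lambda>t. y t + e *\<^sub>R dy t)) - integral K (LDelta s A h U y)" for e
      proof -
        let ?f = "\<lambda>t. LDelta s A h U (\<lambda>t. y t + e *\<^sub>R dy t) t - LDelta s A h U y t"
        have i1: "LDelta s A h U (\<lambda>t. y t + e *\<^sub>R dy t) integrable_on K"
          unfolding K_def by (rule integrable_continuous_real[OF Ld_cont[OF yK dyc]])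
        have i0: "LDelta s A h U y integrable_on K"
          using integrable_continuous_real[OF Ld_cont[OF yK dyc, of 0]] unfolding K_def by simp
        have z: "?f x = 0" if "x \<notin> K" for x
        proof -
          have x0: "dy x = 0" using supp[of x] that \<sigma> unfolding K_def by force
          have xj: "dy (x + real j * h) = 0" if "j \<in> {1..s div 2}" for j
          proof -
            have "0 \<le> real j * h" "real j * h \<le> \<sigma>" using jh_bounds[of j] that by (auto simp: \<sigma>_def)
            then show ?thesis using supp[of "x + real j * h"] \<open>x \<notin> K\<close> unfolding K_def by force
          qed
          show ?thesis unfolding LDelta_def using x0 xj by simp
        qed
        have "(?f has_integral integral K ?f) K" using integrable_diff[OF i1 i0] by blast
        then have "(?f has_integral integral K ?f) UNIV"
          by (rule has_integral_on_superset) (use z in auto)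
        then have "integral UNIV ?f = integral K ?f" by blast
        also have "\<dots> = integral K (LDelta s A h U (\<lambda>t. y t + e *\<^sub>R dy t)) - integral K (LDelta s A h U y)"
          by (rule integral_diff[OF i1 i0])
        finally show ?thesis unfolding S_line_diff_def .
      qed
      have "((\<lambda>e. S_line_diff s A h U y (\<lambda>t. y t + e *\<^sub>R dy t) / e) \<longlongrightarrow> 0) (at 0)"
        using H sm bd by blast
      then have lim: "((\<lambda>e. (integral {c - \<sigma>..d} (LDelta s A h U (\<lambda>t. y t + e *\<^sub>R dy t)) -
                 integral {c - \<sigma>..d} (LDelta s A h U y)) / e) \<longlongrightarrow> 0) (at 0)"
        unfolding eqL K_def .
      have supp': "x \<in> {c - \<sigma> + real (s div 2) * h..d}" if "dy x \<noteq> 0" for x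
        using supp[OF that] by (auto simp: \<sigma>_def)
      have "integral {c - \<sigma> + real (s div 2) * h..d} (Rf y dy) = 0"
        by (rule nonper[OF yK dyc supp' lim])
      then have "integral {c..d} (Rf y dy) = 0" by (simp add: \<sigma>_def)
      then show "integral {c..d} (\<lambda>u. (Ff y u \<bullet> v) * \<psi> u) = 0"
        unfolding dy_def Rf_scale .
    qed
  qed
  then show ?thesis by (rule Ff_zero_imp)
qed

lemma interval_case:
  assumes ab: "a + real (s div 2) * h < b - real (s div 2) * h" and yc: "continuous_on {a..b} y"
    and H: "\<forall>dy. smooth_fun dy \<and> {t. dy t \<noteq> 0} \<subseteq> {a + real (s div 2) * h .. b - real (s div 2) * h} \<longrightarrow>
          ((\<lambda>e. (S_interval s A h U a b (\<lambda>t. y t + e *\<^sub>R dy t) - S_interval s A h U a b y) / e)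
             \<longlongrightarrow> 0) (at 0)"
    and t: "t \<in> {a + real (s div 2) * h .. b - real (s div 2) * h}"
  shows "EL y t = h^2 *\<^sub>R G (y t)"
proof -
  define \<sigma> where "\<sigma> = real (s div 2) * h"
  have \<sigma>: "0 \<le> \<sigma>" unfolding \<sigma>_def using hpos by simp
  have JS: "{a + \<sigma>..b - \<sigma>} \<subseteq> {a..b}" using \<sigma> by auto
  have shf: "\<forall>u\<in>{a + \<sigma>..b - \<sigma>}. u + real j * h \<in> {a..b} \<and> u - real j * h \<in> {a..b}"
    if "j \<in> {1..s div 2}" for j
  proof -
    have "0 \<le> real j * h" "real j * h \<le> \<sigma>" using jh_bounds[of j] that by (auto simp: \<sigma>_def)
    then show ?thesis by auto
  qed
  have Fc: "continuous_on {a + \<sigma>..b - \<sigma>} (Ff y)" by (rule Ff_cont[OF yc JS shf])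
  have "Ff y t = 0"
  proof (rule fund[of "a + \<sigma>" "b - \<sigma>" "Ff y" 1])
    show "continuous_on {a + \<sigma>..b - \<sigma>} (Ff y)" by (rule Fc)
    show "a + \<sigma> < b - \<sigma>" "(0::real) < 1" "t \<in> {a + \<sigma>..b - \<sigma>}" using ab t by (auto simp: \<sigma>_def)
    fix c d assume cd: "a + \<sigma> \<le> c" "c < d" "d \<le> b - \<sigma>" "d - c < 1"
    define \<psi> where "\<psi> = lbump c d"
    show "\<exists>\<psi>. continuous_on {c..d} \<psi> \<and> (\<forall>u\<in>{c..d}. 0 \<le> \<psi> u) \<and> 0 < \<psi> ((c + d) / 2) \<and>
        (\<forall>v. integral {c..d} (\<lambda>u. (Ff y u \<bullet> v) * \<psi> u) = 0)"
    proof (intro exI[of _ \<psi>] conjI allI ballI)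
      show "continuous_on {c..d} \<psi>" unfolding \<psi>_def using continuous_on_subset[OF lbump_cont] by blast
      show "0 \<le> \<psi> u" for u unfolding \<psi>_def by (rule lbump_nonneg)
      show "0 < \<psi> ((c + d) / 2)" unfolding \<psi>_def by (rule lbump_mid[OF cd(2)])
      fix v :: "real^'n"
      define dy where "dy = (\<lambda>t. \<psi> t *\<^sub>R v)"
      have sm: "smooth_fun dy" unfolding dy_def \<psi>_def by (intro smooth_scaleR lbump_smooth)
      have dyc: "continuous_on UNIV dy" by (rule smooth_continuous[OF sm])
      have supp: "x \<in> {c<..<d}" if "dy x \<noteq> 0" for x
        using lbump_support[OF cd(2), of x] that unfolding dy_def \<psi>_def by auto
      have sub: "{t. dy t \<noteq> 0} \<subseteq> {a + real (s div 2) * h .. b - real (s div 2) * h}"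
        using cd by (auto dest!: supp simp: \<sigma>_def)
      have "((\<lambda>e. (S_interval s A h U a b (\<lambda>t. y t + e *\<^sub>R dy t) - S_interval s A h U a b y) / e)
             \<longlongrightarrow> 0) (at 0)" using H sm sub by blast
      then have lim: "((\<lambda>e. (integral {a..b - \<sigma>} (LDelta s A h U (\<lambda>t. y t + e *\<^sub>R dy t)) -
                 integral {a..b - \<sigma>} (LDelta s A h U y)) / e) \<longlongrightarrow> 0) (at 0)"
        unfolding S_interval_def \<sigma>_def .
      have yc': "continuous_on {a..b - \<sigma> + real (s div 2) * h} y" using yc by (simp add: \<sigma>_def)
      have supp': "x \<in> {a + real (s div 2) * h..b - \<sigma>}" if "dy x \<noteq> 0" for x
        using supp[OF that] cd by (auto simp: \<sigma>_def)
      have "integral {a + real (s div 2) * h..b - \<sigma>} (Rf y dy) = 0"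
        by (rule nonper[OF yc' dyc supp' lim])
      moreover have "integral {a + \<sigma>..b - \<sigma>} (Rf y dy) = integral {c..d} (Rf y dy)"
      proof (rule integral_shrink)
        show "{c..d} \<subseteq> {a + \<sigma>..b - \<sigma>}" using cd by auto
        show "Rf y dy x = 0" if "x \<in> {a + \<sigma>..b - \<sigma>}" "x \<notin> {c..d}" for x
        proof -
          have "dy x = 0" using supp[of x] that by force
          then show ?thesis by (simp add: Rf_def)
        qed
        have "{c..d} \<subseteq> {a..b}" using cd JS by auto
        moreover have "\<And>j. j \<in> {1..s div 2} \<Longrightarrow> \<forall>u\<in>{c..d}. u + real j * h \<in> {a..b} \<and> u - real j * h \<in> {a..b}"
          using shf cd by fastforce
        ultimately have "continuous_on {c..d} (Rf y dy)" by (intro Rf_cont[OF yc dyc])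
        then show "Rf y dy integrable_on {c..d}" by (rule integrable_continuous_real)
      qed
      ultimately have "integral {c..d} (Rf y dy) = 0" by (simp add: \<sigma>_def)
      then show "integral {c..d} (\<lambda>u. (Ff y u \<bullet> v) * \<psi> u) = 0"
        unfolding dy_def Rf_scale .
    qed
  qed
  then show ?thesis by (rule Ff_zero_imp)
qed

end

theorem lemma2p1:
  fixes s :: nat and A :: "nat \<Rightarrow> real^'n^'n" and h :: real
    and U :: "real^'n \<Rightarrow> real" and G :: "real^'n \<Rightarrow> real^'n"
  assumes "even s"
    and "\<forall>j\<in>{1..s div 2}. transpose (A j) = A j"
    and "h > 0"
    and "\<forall>x. (U has_derivative (\<lambda>v. G x \<bullet> v)) (at x)"
    and "continuous_on UNIV G"
  shows
   "(\<forall>T y. T > 0 \<and> (\<forall>t. y (t + T) = y t) \<and> continuous_on UNIV y \<and>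
       (\<forall>dy. smooth_fun dy \<and> (\<forall>t. dy (t + T) = dy t) \<longrightarrow>
          ((\<lambda>e. (S_circle s A h U T (\<lambda>t. y t + e *\<^sub>R dy t) - S_circle s A h U T y) / e)
             \<longlongrightarrow> 0) (at 0))
     \<longrightarrow> (\<forall>t. (\<Sum>j = 1..s div 2. A j *v (y (t - real j * h) - 2 *\<^sub>R y t + y (t + real j * h)))
               = h^2 *\<^sub>R G (y t)))
  \<and> (\<forall>y. continuous_on UNIV y \<and>
       (\<forall>dy. smooth_fun dy \<and> bounded {t. dy t \<noteq> 0} \<longrightarrow>
          ((\<lambda>e. S_line_diff s A h U y (\<lambda>t. y t + e *\<^sub>R dy t) / e) \<longlongrightarrow> 0) (at 0))
     \<longrightarrow> (\<forall>t. (\<Sum>j = 1..s div 2. A j *v (y (t - real j * h) - 2 *\<^sub>R y t + y (t + real j * h)))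
               = h^2 *\<^sub>R G (y t)))
  \<and> (\<forall>a b y. a + real (s div 2) * h < b - real (s div 2) * h \<and> continuous_on {a..b} y \<and>
       (\<forall>dy. smooth_fun dy \<and> {t. dy t \<noteq> 0} \<subseteq> {a + real (s div 2) * h .. b - real (s div 2) * h} \<longrightarrow>
          ((\<lambda>e. (S_interval s A h U a b (\<lambda>t. y t + e *\<^sub>R dy t) - S_interval s A h U a b y) / e)
             \<longlongrightarrow> 0) (at 0))
     \<longrightarrow> (\<forall>t\<in>{a + real (s div 2) * h .. b - real (s div 2) * h}.
            (\<Sum>j = 1..s div 2. A j *v (y (t - real j * h) - 2 *\<^sub>R y t + y (t + real j * h)))
               = h^2 *\<^sub>R G (y t)))"
proof -
  have C1: "EL s A h y t = h^2 *\<^sub>R G (y t)" if "T > 0" "\<forall>t. y (t + T) = y t" "continuous_on UNIV y"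
    "\<forall>dy. smooth_fun dy \<and> (\<forall>t. dy (t + T) = dy t) \<longrightarrow>
          ((\<lambda>e. (S_circle s A h U T (\<lambda>t. y t + e *\<^sub>R dy t) - S_circle s A h U T y) / e)
             \<longlongrightarrow> 0) (at 0)" for T y t
    by (rule circle_case[OF assms(2-5) that])
  have C2: "EL s A h y t = h^2 *\<^sub>R G (y t)" if "continuous_on UNIV y"
    "\<forall>dy. smooth_fun dy \<and> bounded {t. dy t \<noteq> 0} \<longrightarrow>
          ((\<lambda>e. S_line_diff s A h U y (\<lambda>t. y t + e *\<^sub>R dy t) / e) \<longlongrightarrow> 0) (at 0)" for y t
    by (rule line_case[OF assms(2-5) that])
  have C3: "EL s A h y t = h^2 *\<^sub>R G (y t)" if
    "a + real (s div 2) * h < b - real (s div 2) * h" "continuous_on {a..b} y"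
    "\<forall>dy. smooth_fun dy \<and> {t. dy t \<noteq> 0} \<subseteq> {a + real (s div 2) * h .. b - real (s div 2) * h} \<longrightarrow>
          ((\<lambda>e. (S_interval s A h U a b (\<lambda>t. y t + e *\<^sub>R dy t) - S_interval s A h U a b y) / e)
             \<longlongrightarrow> 0) (at 0)"
    "t \<in> {a + real (s div 2) * h .. b - real (s div 2) * h}" for a b y t
    by (rule interval_case[OF assms(2-5) that])
  show ?thesis
  proof (intro conjI allI impI ballI; elim conjE)
    show "(\<Sum>j = 1..s div 2. A j *v (y (t - real j * h) - 2 *\<^sub>R y t + y (t + real j * h))) = h\<^sup>2 *\<^sub>R G (y t)"
      if "0 < T" "\<forall>t. y (t + T) = y t" "continuous_on UNIV y"
    "\<forall>dy. smooth_fun dy \<and> (\<forall>t. dy (t + T) = dy t) \<longrightarrow>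
          ((\<lambda>e. (S_circle s A h U T (\<lambda>t. y t + e *\<^sub>R dy t) - S_circle s A h U T y) / e)
             \<longlongrightarrow> 0) (at 0)" for T y t
      using C1[OF that] by (simp add: EL_def[OF assms(2-5)])
    show "(\<Sum>j = 1..s div 2. A j *v (y (t - real j * h) - 2 *\<^sub>R y t + y (t + real j * h))) = h\<^sup>2 *\<^sub>R G (y t)"
      if "continuous_on UNIV y"
    "\<forall>dy. smooth_fun dy \<and> bounded {t. dy t \<noteq> 0} \<longrightarrow>
          ((\<lambda>e. S_line_diff s A h U y (\<lambda>t. y t + e *\<^sub>R dy t) / e) \<longlongrightarrow> 0) (at 0)" for y t
      using C2[OF that] by (simp add: EL_def[OF assms(2-5)])
    show "(\<Sum>j = 1..s div 2. A j *v (y (t - real j * h) - 2 *\<^sub>R y t + y (t + real j * h))) = h\<^sup>2 *\<^sub>R G (y t)"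
      if "t \<in> {a + real (s div 2) * h .. b - real (s div 2) * h}"
    "a + real (s div 2) * h < b - real (s div 2) * h" "continuous_on {a..b} y"
    "\<forall>dy. smooth_fun dy \<and> {t. dy t \<noteq> 0} \<subseteq> {a + real (s div 2) * h .. b - real (s div 2) * h} \<longrightarrow>
          ((\<lambda>e. (S_interval s A h U a b (\<lambda>t. y t + e *\<^sub>R dy t) - S_interval s A h U a b y) / e)
             \<longlongrightarrow> 0) (at 0)" for a b y t
      using C3[OF that(2-4) that(1)] by (simp add: EL_def[OF assms(2-5)])
  qed
qed

end
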